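(* Let $\mu$ be a probability distribution on $(E,\mathscr{E})$. Let $\xi:E\to E$ be a measurable involution with $\mu\circ\xi^{-1}=\mu$, so that $Qf=f\circ\xi$ defines an isometric involution of $L^{2}(\mu)$. Assume: (1) $\psi:E\to E$ is a measurable bijection with $\psi^{-1}=\xi\circ\psi\circ\xi$; (2) $\phi:\mathbb{R}_{+}\to[0,1]$ satisfies $r\phi(r^{-1})=\phi(r)$ for $r>0$ and $\phi(0)=0$; (3) with $\nu:=\mu+\mu^{\xi\circ\psi}$, define for $z\in E$, $r(z):=\frac{{\rm d}\mu^{\xi\circ\psi}/{\rm d}\nu(z)}{{\rm d}\mu/{\rm d}\nu(z)}$ if both ${\rm d}\mu^{\xi\circ\psi}/{\rm d}\nu(z)>0$ and ${\rm d}\mu/{\rm d}\nu(z)>0$, and $r(z):=0$ otherwise. Then the Markov kernel \[P(z,{\rm d}z'):=\phi\circ r(z)\,\delta_{\psi(z)}({\rm d}z')+\big[1-\phi\circ r(z)\big]\delta_{\xi(z)}({\rm d}z')\] is $(\mu,Q)$-reversible.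
   Context: For a measurable $\varphi:E\to E$, $\mu^{\varphi}(A):=\mu(\varphi^{-1}(A))$. $\langle f,g\rangle_{\mu}=\int fg\,{\rm d}\mu$. A Markov kernel $P$ is $(\mu,Q)$-reversible if $\langle Pf,g\rangle_{\mu}=\langle f,QPQg\rangle_{\mu}$ for all $f,g\in L^{2}(\mu)$. *)

theory Defs
  imports "HOL-Probability.Probability"
begin

definition add_measure :: "'a measure \<Rightarrow> 'a measure \<Rightarrow> 'a measure" where
  "add_measure M N = measure_of (space M) (sets M) (\<lambda>A. emeasure M A + emeasure N A)"

abbreviation pushfwd :: "'a measure \<Rightarrow> ('a \<Rightarrow> 'a) \<Rightarrow> 'a measure" where
  "pushfwd M f \<equiv> distr M M f"

definition kernel_op :: "('a \<Rightarrow> 'a measure) \<Rightarrow> ('a \<Rightarrow> real) \<Rightarrow> 'a \<Rightarrow> real" where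
  "kernel_op P f z = (\<integral>y. f y \<partial>(P z))"

definition L2 :: "'a measure \<Rightarrow> ('a \<Rightarrow> real) \<Rightarrow> bool" where
  "L2 M f \<longleftrightarrow> f \<in> borel_measurable M \<and> integrable M (\<lambda>x. (f x)\<^sup>2)"

definition inner_L2 :: "'a measure \<Rightarrow> ('a \<Rightarrow> real) \<Rightarrow> ('a \<Rightarrow> real) \<Rightarrow> real" where
  "inner_L2 M f g = (\<integral>x. f x * g x \<partial>M)"

definition reversible :: "'a measure \<Rightarrow> (('a \<Rightarrow> real) \<Rightarrow> ('a \<Rightarrow> real)) \<Rightarrow> ('a \<Rightarrow> 'a measure) \<Rightarrow> bool" where
  "reversible M Q P \<longleftrightarrow>
     (\<forall>f g. L2 M f \<longrightarrow> L2 M g \<longrightarrow>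
        inner_L2 M (kernel_op P f) g = inner_L2 M f (Q (kernel_op P (Q g))))"

definition ratio_r :: "'a measure \<Rightarrow> ('a \<Rightarrow> 'a) \<Rightarrow> ('a \<Rightarrow> 'a) \<Rightarrow> 'a \<Rightarrow> real" where
  "ratio_r M \<xi> \<psi> z =
     (let \<nu> = add_measure M (pushfwd M (\<xi> \<circ> \<psi>));
          a = enn2real (RN_deriv \<nu> (pushfwd M (\<xi> \<circ> \<psi>)) z);
          b = enn2real (RN_deriv \<nu> M z)
      in if RN_deriv \<nu> (pushfwd M (\<xi> \<circ> \<psi>)) z > 0 \<and> RN_deriv \<nu> M z > 0 then a / b else 0)"

definition mix_kernel :: "'a measure \<Rightarrow> (real \<Rightarrow> real) \<Rightarrow> ('a \<Rightarrow> 'a) \<Rightarrow> ('a \<Rightarrow> 'a) \<Rightarrow> 'a \<Rightarrow> 'a measure" where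
  "mix_kernel M \<phi> \<xi> \<psi> z =
     measure_of (space M) (sets M)
       (\<lambda>A. ennreal (\<phi> (ratio_r M \<xi> \<psi> z)) * indicator A (\<psi> z)
           + ennreal (1 - \<phi> (ratio_r M \<xi> \<psi> z)) * indicator A (\<xi> z))"

end

theory Submission
  imports Defs
begin

lemma add_measure_props:
  assumes "sets N = sets M"
  shows "sets (add_measure M N) = sets M" "space (add_measure M N) = space M"
    "\<And>X. X \<in> sets M \<Longrightarrow> emeasure (add_measure M N) X = emeasure M X + emeasure N X"
proof -
  show "sets (add_measure M N) = sets M" "space (add_measure M N) = space M"
    by (simp_all add: add_measure_def)
  fix X assume X: "X \<in> sets M"
  show "emeasure (add_measure M N) X = emeasure M X + emeasure N X"
    unfolding add_measure_def
  proof (rule emeasure_measure_of_sigma[OF sets.sigma_algebra_axioms _ _ X])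
    show "positive (sets M) (\<lambda>A. emeasure M A + emeasure N A)"
      by (simp add: positive_def)
    show "countably_additive (sets M) (\<lambda>A. emeasure M A + emeasure N A)"
    proof (rule countably_additiveI)
      fix A :: "nat \<Rightarrow> _" assume A: "range A \<subseteq> sets M" "disjoint_family A" "(\<Union>i. A i) \<in> sets M"
      then have A': "range A \<subseteq> sets N" using assms by simp
      show "(\<Sum>i. emeasure M (A i) + emeasure N (A i)) = emeasure M (\<Union>i. A i) + emeasure N (\<Union>i. A i)"
        using suminf_emeasure[OF A(1,2)] suminf_emeasure[OF A' A(2)]
        by (simp add: suminf_add[symmetric])
    qed
  qed
qed

lemma mix_integral:
  fixes c :: real
  assumes c: "0 \<le> c" "c \<le> 1" and pq: "p \<in> space M" "q \<in> space M"
    and f: "f \<in> borel_measurable M"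
  shows "(\<integral>y. f y \<partial>measure_of (space M) (sets M)
       (\<lambda>A. ennreal c * indicator A p + ennreal (1 - c) * indicator A q)) = c * f p + (1 - c) * f q"
proof -
  define w where "w = (\<lambda>b::bool. if b then c else 1 - c)"
  define W where "W = density (count_space UNIV) (\<lambda>b. ennreal (w b))"
  define h where "h = (\<lambda>b::bool. if b then p else q)"
  have hm: "h \<in> measurable W M"
    using pq by (auto simp: W_def h_def)
  have eq: "measure_of (space M) (sets M)
       (\<lambda>A. ennreal c * indicator A p + ennreal (1 - c) * indicator A q) = distr W M h"
    unfolding distr_def
  proof (rule measure_of_eq)
    show "sets M \<subseteq> Pow (space M)" by (rule sets.space_closed)
    fix A assume "A \<in> sigma_sets (space M) (sets M)"
    have "emeasure W (h -` A \<inter> space W) = (\<Sum>b\<in>UNIV. ennreal (w b) * indicator (h -` A) b)"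
      unfolding W_def
      by (simp add: emeasure_density nn_integral_count_space_finite)
    also have "\<dots> = ennreal c * indicator A p + ennreal (1 - c) * indicator A q"
      by (simp add: UNIV_bool w_def h_def indicator_def add.commute)
    finally show "ennreal c * indicator A p + ennreal (1 - c) * indicator A q = emeasure W (h -` A \<inter> space W)"
      by simp
  qed
  have "(\<integral>y. f y \<partial>distr W M h) = (\<integral>b. f (h b) \<partial>W)"
    by (rule integral_distr[OF hm f])
  also have "\<dots> = (\<integral>b. w b *\<^sub>R f (h b) \<partial>count_space UNIV)"
    unfolding W_def using c by (subst integral_density) (auto simp: w_def)
  also have "\<dots> = c * f p + (1 - c) * f q"
    by (simp add: lebesgue_integral_count_space_finite UNIV_bool w_def h_def)
  finally show ?thesis using eq by simp
qed

lemma ratio_swap: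
  fixes \<phi> :: "real \<Rightarrow> real" and a b :: ennreal
  assumes inv: "\<And>r. r > 0 \<Longrightarrow> r * \<phi> (1 / r) = \<phi> r" and z: "\<phi> 0 = 0"
  defines "rr \<equiv> \<lambda>a b::ennreal. if a > 0 \<and> b > 0 then enn2real a / enn2real b else 0"
  shows "\<phi> (rr a b) * enn2real b = \<phi> (rr b a) * enn2real a"
proof (cases "a > 0 \<and> b > 0 \<and> enn2real a > 0 \<and> enn2real b > 0")
  case True
  define s where "s = enn2real a / enn2real b"
  have s: "s > 0" using True by (simp add: s_def)
  have "\<phi> (rr b a) * enn2real a = \<phi> (1 / s) * s * enn2real b"
    using True by (simp add: rr_def s_def)
  also have "\<dots> = \<phi> s * enn2real b" using inv[OF s] by (simp add: mult.commute)
  finally show ?thesis using True by (simp add: rr_def s_def)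
next
  case False
  have "enn2real a \<ge> 0" "enn2real b \<ge> 0" by auto
  with False show ?thesis by (auto simp: rr_def z)
qed

lemma distr_cong_target:
  "sets N = sets N' \<Longrightarrow> distr X N f = distr X N' f"
  by (simp add: distr_def sets_eq_imp_space_eq[of N N'])

lemma density_invol:
  assumes sf: "sigma_finite_measure V" and Tm: "T \<in> measurable V V"
    and inv: "\<And>z. z \<in> space V \<Longrightarrow> T (T z) = z"
    and dV: "distr V V T = V" and h: "h \<in> borel_measurable V"
  shows "density V (\<lambda>z. h (T z)) = distr (density V h) V T"
proof -
  have "density V h = density (distr V V T) h" using dV by simp
  also have "\<dots> = distr (density V (\<lambda>z. h (T z))) V T"
    by (rule density_distr[OF h Tm])
  finally have e: "distr (density V h) V T = distr (distr (density V (\<lambda>z. h (T z))) V T) V T"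
    by simp
  have Tm': "T \<in> measurable (density V (\<lambda>z. h (T z))) V" using Tm by simp
  have "distr (distr (density V (\<lambda>z. h (T z))) V T) V T = distr (density V (\<lambda>z. h (T z))) V (T \<circ> T)"
    by (rule distr_distr[OF Tm Tm'])
  also have "\<dots> = distr (density V (\<lambda>z. h (T z))) (density V (\<lambda>z. h (T z))) (\<lambda>x. x)"
    by (rule distr_cong) (auto simp: inv)
  also have "\<dots> = density V (\<lambda>z. h (T z))" by simp
  finally show ?thesis using e by simp
qed

lemma key_swap:
  fixes \<phi> :: "real \<Rightarrow> real" and G K :: "'a \<Rightarrow> real"
  assumes sV: "sets V = sets M"
    and Tm: "T \<in> measurable M M" and inv: "\<And>z. z \<in> space M \<Longrightarrow> T (T z) = z"
    and dV: "distr V V T = V"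
    and Am: "A \<in> borel_measurable M" and Bm: "B \<in> borel_measurable M"
    and dens: "M = density V (\<lambda>z. ennreal (enn2real (B z)))"
    and AB: "AE z in V. A (T z) = B z" and BA: "AE z in V. B (T z) = A z"
    and \<phi>inv: "\<And>r. r > 0 \<Longrightarrow> r * \<phi> (1 / r) = \<phi> r" and \<phi>0: "\<phi> 0 = 0"
    and \<phi>m: "\<phi> \<in> borel_measurable borel"
    and r: "r = (\<lambda>z. if A z > 0 \<and> B z > 0 then enn2real (A z) / enn2real (B z) else 0)"
    and Gm: "G \<in> borel_measurable M" and Km: "K \<in> borel_measurable M"
  shows "integrable M (\<lambda>z. \<phi> (r z) * G z * K (T z)) \<longleftrightarrow> integrable M (\<lambda>w. \<phi> (r w) * G (T w) * K w)"
    and "(\<integral>z. \<phi> (r z) * G z * K (T z) \<partial>M) = (\<integral>w. \<phi> (r w) * G (T w) * K w \<partial>M)"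
proof -
  have [measurable_cong]: "sets V = sets M" by (rule sV)
  have spV: "space V = space M" using sV by (rule sets_eq_imp_space_eq)
  have [measurable]: "T \<in> measurable M M" "A \<in> borel_measurable M" "B \<in> borel_measurable M"
     "G \<in> borel_measurable M" "K \<in> borel_measurable M" "\<phi> \<in> borel_measurable borel"
    using assms by auto
  have TmV: "T \<in> measurable V V" using Tm by (simp add: measurable_cong_sets[OF sV sV])
  have rm[measurable]: "r \<in> borel_measurable M" unfolding r by measurable
  define B' where "B' = (\<lambda>z. enn2real (B z))"
  have B'm[measurable]: "B' \<in> borel_measurable M" unfolding B'_def by measurable
  define h1 where "h1 = (\<lambda>z. \<phi> (r z) * G z * K (T z))"
  define h2 where "h2 = (\<lambda>w. \<phi> (r w) * G (T w) * K w)"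
  define k where "k = (\<lambda>w. B' w *\<^sub>R h2 w)"
  have h1m[measurable]: "h1 \<in> borel_measurable M" unfolding h1_def by measurable
  have h2m[measurable]: "h2 \<in> borel_measurable M" unfolding h2_def by measurable
  have km[measurable]: "k \<in> borel_measurable M" unfolding k_def by measurable
  have ae: "AE z in V. B' z *\<^sub>R h1 z = k (T z)"
    using AB BA AE_space
  proof eventually_elim
    case (elim z)
    then have zM: "z \<in> space M" using spV by simp
    have "\<phi> (r z) * B' z = \<phi> (r (T z)) * B' (T z)"
      using ratio_swap[OF \<phi>inv \<phi>0, of "A z" "B z"] elim by (simp add: r B'_def)
    then show ?case using inv[OF zM]
      by (simp add: h1_def k_def h2_def) (metis mult.commute mult.left_commute)
  qed
  have B'nn: "AE z in V. 0 \<le> B' z" by (simp add: B'_def)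
  have dens': "M = density V (\<lambda>z. ennreal (B' z))" using dens by (simp add: B'_def)
  have kV: "k \<in> borel_measurable V" by simp
  have "integrable M h1 \<longleftrightarrow> integrable V (\<lambda>z. B' z *\<^sub>R h1 z)"
    by (subst dens') (rule integrable_density, auto simp: B'nn)
  also have "\<dots> \<longleftrightarrow> integrable V (\<lambda>z. k (T z))"
    by (rule integrable_cong_AE) (use ae in auto)
  also have "\<dots> \<longleftrightarrow> integrable (distr V V T) k"
    by (rule integrable_distr_eq[OF TmV kV, symmetric])
  also have "\<dots> \<longleftrightarrow> integrable M h2"
    unfolding dV k_def by (subst dens') (rule integrable_density[symmetric], auto simp: B'nn)
  finally show "integrable M (\<lambda>z. \<phi> (r z) * G z * K (T z)) \<longleftrightarrow> integrable M (\<lambda>w. \<phi> (r w) * G (T w) * K w)"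
    by (simp add: h1_def h2_def)
  have "integral\<^sup>L M h1 = (\<integral>z. B' z *\<^sub>R h1 z \<partial>V)"
    by (subst dens') (rule integral_density, auto simp: B'nn)
  also have "\<dots> = (\<integral>z. k (T z) \<partial>V)"
    by (rule integral_cong_AE) (use ae in auto)
  also have "\<dots> = integral\<^sup>L (distr V V T) k"
    by (rule integral_distr[OF TmV kV, symmetric])
  also have "\<dots> = integral\<^sup>L M h2"
    unfolding dV k_def by (subst dens') (rule integral_density[symmetric], auto simp: B'nn)
  finally show "(\<integral>z. \<phi> (r z) * G z * K (T z) \<partial>M) = (\<integral>w. \<phi> (r w) * G (T w) * K w \<partial>M)"
    by (simp add: h1_def h2_def)
qed

lemma bnd1:
  fixes c x y :: real
  assumes "0 \<le> c" "c \<le> 1"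
  shows "\<bar>c * x * y\<bar> \<le> x\<^sup>2 + c * 1 * y\<^sup>2"
proof -
  have xy: "\<bar>x * y\<bar> \<le> x\<^sup>2 + y\<^sup>2"
  proof -
    have "0 \<le> (\<bar>x\<bar> - \<bar>y\<bar>)\<^sup>2" by simp
    moreover have "(\<bar>x\<bar> - \<bar>y\<bar>)\<^sup>2 = x\<^sup>2 + y\<^sup>2 - 2 * (\<bar>x\<bar> * \<bar>y\<bar>)"
      by (simp add: power2_eq_square algebra_simps)
    moreover have "\<bar>x * y\<bar> = \<bar>x\<bar> * \<bar>y\<bar>" by (simp add: abs_mult)
    moreover have "0 \<le> \<bar>x\<bar> * \<bar>y\<bar>" by simp
    ultimately show ?thesis by linarith
  qed
  have "\<bar>c * x * y\<bar> = c * \<bar>x * y\<bar>" using assms by (simp add: abs_mult)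
  also have "\<dots> \<le> c * (x\<^sup>2 + y\<^sup>2)" using xy assms by (simp add: mult_left_mono)
  also have "\<dots> = c * x\<^sup>2 + c * y\<^sup>2" by (simp add: algebra_simps)
  also have "\<dots> \<le> x\<^sup>2 + c * 1 * y\<^sup>2" using assms mult_right_mono[of c 1 "x\<^sup>2"] by simp
  finally show ?thesis .
qed

lemma bnd2:
  fixes c x y :: real
  assumes "\<bar>c\<bar> \<le> 1"
  shows "\<bar>c * x * y\<bar> \<le> x\<^sup>2 + y\<^sup>2"
proof -
  have xy: "\<bar>x * y\<bar> \<le> x\<^sup>2 + y\<^sup>2"
  proof -
    have "0 \<le> (\<bar>x\<bar> - \<bar>y\<bar>)\<^sup>2" by simp
    moreover have "(\<bar>x\<bar> - \<bar>y\<bar>)\<^sup>2 = x\<^sup>2 + y\<^sup>2 - 2 * (\<bar>x\<bar> * \<bar>y\<bar>)"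
      by (simp add: power2_eq_square algebra_simps)
    moreover have "\<bar>x * y\<bar> = \<bar>x\<bar> * \<bar>y\<bar>" by (simp add: abs_mult)
    moreover have "0 \<le> \<bar>x\<bar> * \<bar>y\<bar>" by simp
    ultimately show ?thesis by linarith
  qed
  have "\<bar>c * x * y\<bar> = \<bar>c\<bar> * \<bar>x * y\<bar>" by (simp add: abs_mult)
  also have "\<dots> \<le> 1 * \<bar>x * y\<bar>" using assms by (intro mult_right_mono) auto
  finally show ?thesis using xy by simp
qed

theorem proposition3p5:
  fixes M :: "'a measure" and \<xi> \<psi> :: "'a \<Rightarrow> 'a" and \<phi> :: "real \<Rightarrow> real"
  assumes "prob_space M"
    and "\<xi> \<in> M \<rightarrow>\<^sub>M M" and "\<And>z. z \<in> space M \<Longrightarrow> \<xi> (\<xi> z) = z"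
    and "distr M M \<xi> = M"
    and "\<psi> \<in> M \<rightarrow>\<^sub>M M" and "bij_betw \<psi> (space M) (space M)"
    and "\<And>z. z \<in> space M \<Longrightarrow> \<psi> (\<xi> (\<psi> (\<xi> z))) = z"
    and "\<And>z. z \<in> space M \<Longrightarrow> \<xi> (\<psi> (\<xi> (\<psi> z))) = z"
    and "\<phi> \<in> borel_measurable borel"
    and "\<And>r. r \<ge> 0 \<Longrightarrow> 0 \<le> \<phi> r \<and> \<phi> r \<le> 1"
    and "\<And>r. r > 0 \<Longrightarrow> r * \<phi> (1 / r) = \<phi> r"
    and "\<phi> 0 = 0"
  shows "reversible M (\<lambda>f. f \<circ> \<xi>) (mix_kernel M \<phi> \<xi> \<psi>)"
proof -
  interpret M: prob_space M by fact
  have \<xi>m[measurable]: "\<xi> \<in> M \<rightarrow>\<^sub>M M" and \<psi>m[measurable]: "\<psi> \<in> M \<rightarrow>\<^sub>M M"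
    and \<phi>m[measurable]: "\<phi> \<in> borel_measurable borel" using assms by auto
  define T where "T = \<xi> \<circ> \<psi>"
  have Tm[measurable]: "T \<in> M \<rightarrow>\<^sub>M M" unfolding T_def by measurable
  have Tinv: "\<And>z. z \<in> space M \<Longrightarrow> T (T z) = z" using assms(8) by (simp add: T_def)
  define MT where "MT = distr M M T"
  define \<nu> where "\<nu> = add_measure M MT"
  have sMT: "sets MT = sets M" by (simp add: MT_def)
  note \<nu>p = add_measure_props[OF sMT, folded \<nu>_def]
  have s\<nu>[measurable_cong]: "sets \<nu> = sets M" and sp\<nu>: "space \<nu> = space M" using \<nu>p by auto
  have MTM: "distr MT M T = M"
  proof -
    have "distr MT M T = distr M M (T \<circ> T)" unfolding MT_def
      by (rule distr_distr) auto
    also have "\<dots> = distr M M (\<lambda>x. x)" by (rule distr_cong) (auto simp: Tinv)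
    finally show ?thesis by simp
  qed
  have fin\<nu>: "finite_measure \<nu>"
  proof (rule finite_measureI)
    have "emeasure \<nu> (space \<nu>) = emeasure M (space M) + emeasure MT (space M)"
      using \<nu>p(3)[of "space M"] sp\<nu> by simp
    also have "\<dots> \<noteq> \<infinity>" unfolding MT_def
      by (simp add: emeasure_distr M.emeasure_space_1)
    finally show "emeasure \<nu> (space \<nu>) \<noteq> \<infinity>" .
  qed
  interpret \<nu>: finite_measure \<nu> by (rule fin\<nu>)
  have acM: "absolutely_continuous \<nu> M" and acMT: "absolutely_continuous \<nu> MT"
    unfolding absolutely_continuous_def
    using \<nu>p(3) s\<nu> sMT by (auto simp: null_sets_def)
  have d\<nu>: "distr \<nu> \<nu> T = \<nu>"
  proof (rule measure_eqI)
    show "sets (distr \<nu> \<nu> T) = sets \<nu>" by simp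
    fix X assume "X \<in> sets (distr \<nu> \<nu> T)"
    then have X: "X \<in> sets M" using s\<nu> by simp
    have TX: "T -` X \<inter> space M \<in> sets M" using X by measurable
    have eqs: "T -` (T -` X \<inter> space M) \<inter> space M = X"
      using X Tinv sets.sets_into_space[OF X] Tm[THEN measurable_space] by auto
    have "emeasure (distr \<nu> \<nu> T) X = emeasure \<nu> (T -` X \<inter> space M)"
      using X sp\<nu> by (subst emeasure_distr) (auto simp: measurable_cong_sets[OF s\<nu> s\<nu>])
    also have "\<dots> = emeasure M (T -` X \<inter> space M) + emeasure MT (T -` X \<inter> space M)"
      using \<nu>p(3)[OF TX] .
    also have "\<dots> = emeasure MT X + emeasure M X"
      unfolding MT_def using X TX eqs by (simp add: emeasure_distr)
    also have "\<dots> = emeasure \<nu> X" using \<nu>p(3)[OF X] by (simp add: add.commute)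
    finally show "emeasure (distr \<nu> \<nu> T) X = emeasure \<nu> X" .
  qed
  define A where "A = RN_deriv \<nu> MT"
  define B where "B = RN_deriv \<nu> M"
  have Am[measurable]: "A \<in> borel_measurable M" and Bm[measurable]: "B \<in> borel_measurable M"
    unfolding A_def B_def by (auto simp: measurable_cong_sets[OF s\<nu> refl, symmetric])
  have dB: "density \<nu> B = M" unfolding B_def
    by (rule \<nu>.density_RN_deriv[OF acM]) (simp add: s\<nu>)
  have dA: "density \<nu> A = MT" unfolding A_def
    by (rule \<nu>.density_RN_deriv[OF acMT]) (simp add: s\<nu> sMT)
  have sfM: "sigma_finite_measure M" by unfold_locales
  have Bfin: "AE z in \<nu>. B z \<noteq> \<infinity>" unfolding B_def
    by (rule \<nu>.RN_deriv_finite[OF sfM acM]) (simp add: s\<nu>)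
  have dens: "M = density \<nu> (\<lambda>z. ennreal (enn2real (B z)))"
  proof -
    have "density \<nu> B = density \<nu> (\<lambda>z. ennreal (enn2real (B z)))"
      by (rule density_cong) (use Bfin in \<open>auto simp: ennreal_enn2real_if\<close>)
    then show ?thesis using dB by simp
  qed
  have TmV: "T \<in> measurable \<nu> \<nu>" by (simp add: measurable_cong_sets[OF s\<nu> s\<nu>])
  have AB: "AE z in \<nu>. A (T z) = B z"
  proof (rule \<nu>.density_unique)
    have "density \<nu> (\<lambda>z. A (T z)) = distr (density \<nu> A) \<nu> T"
      by (rule density_invol[OF _ TmV _ d\<nu>]) (auto simp: sp\<nu> Tinv \<nu>.sigma_finite_measure_axioms)
    also have "\<dots> = distr MT M T" using dA distr_cong_target[OF s\<nu>] by simp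
    also have "\<dots> = density \<nu> B" using MTM dB by simp
    finally show "density \<nu> (\<lambda>z. A (T z)) = density \<nu> B" .
  qed auto
  have BA: "AE z in \<nu>. B (T z) = A z"
  proof (rule \<nu>.density_unique)
    have "density \<nu> (\<lambda>z. B (T z)) = distr (density \<nu> B) \<nu> T"
      by (rule density_invol[OF _ TmV _ d\<nu>]) (auto simp: sp\<nu> Tinv \<nu>.sigma_finite_measure_axioms)
    also have "\<dots> = distr M M T" using dB distr_cong_target[OF s\<nu>] by simp
    also have "\<dots> = density \<nu> A" using dA by (simp add: MT_def)
    finally show "density \<nu> (\<lambda>z. B (T z)) = density \<nu> A" .
  qed auto
  define r where "r = ratio_r M \<xi> \<psi>"
  have r: "r = (\<lambda>z. if A z > 0 \<and> B z > 0 then enn2real (A z) / enn2real (B z) else 0)"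
    unfolding r_def ratio_r_def A_def B_def \<nu>_def MT_def T_def by (simp add: Let_def)
  have rm[measurable]: "r \<in> borel_measurable M" unfolding r by measurable
  have r0: "\<And>z. r z \<ge> 0" unfolding r by simp
  have \<phi>b: "\<And>z. 0 \<le> \<phi> (r z) \<and> \<phi> (r z) \<le> 1" using assms(10) r0 by blast
  note key = key_swap[OF s\<nu> Tm Tinv d\<nu> Am Bm dens AB BA assms(11,12) \<phi>m r]
  have kop: "\<And>h z. h \<in> borel_measurable M \<Longrightarrow> z \<in> space M \<Longrightarrow>
      kernel_op (mix_kernel M \<phi> \<xi> \<psi>) h z = \<phi> (r z) * h (\<psi> z) + (1 - \<phi> (r z)) * h (\<xi> z)"
    unfolding kernel_op_def mix_kernel_def r_def[symmetric]
    by (rule mix_integral) (use \<phi>b in \<open>auto intro: measurable_space[OF \<xi>m] measurable_space[OF \<psi>m]\<close>)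
  show ?thesis unfolding reversible_def
  proof (intro allI impI)
    fix f g assume Lf: "L2 M f" and Lg: "L2 M g"
    have fm[measurable]: "f \<in> borel_measurable M" and f2: "integrable M (\<lambda>x. (f x)\<^sup>2)"
      using Lf by (auto simp: L2_def)
    have gm[measurable]: "g \<in> borel_measurable M" and g2: "integrable M (\<lambda>x. (g x)\<^sup>2)"
      using Lg by (auto simp: L2_def)
    define F where "F = (\<lambda>z. f (\<xi> z))"
    have Fm[measurable]: "F \<in> borel_measurable M" unfolding F_def by measurable
    have F2: "integrable M (\<lambda>x. (F x)\<^sup>2)"
    proof -
      have "integrable (distr M M \<xi>) (\<lambda>x. (f x)\<^sup>2)" using f2 assms(4) by simp
      then show ?thesis unfolding F_def by (subst (asm) integrable_distr_eq) auto
    qed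
    have FT: "\<And>z. z \<in> space M \<Longrightarrow> F (T z) = f (\<psi> z)"
      unfolding F_def T_def using assms(3) measurable_space[OF \<psi>m] by auto
    have i0: "integrable M (\<lambda>w. \<phi> (r w) * 1 * (F w)\<^sup>2)"
      by (rule Bochner_Integration.integrable_bound[OF F2]) (use \<phi>b in \<open>auto intro!: AE_I2 mult_left_le_one_le\<close>)
    have i0': "integrable M (\<lambda>z. \<phi> (r z) * 1 * (F (T z))\<^sup>2)"
      using i0 key(1)[of "\<lambda>_. 1" "\<lambda>w. (F w)\<^sup>2"] by simp
    have I1i: "integrable M (\<lambda>z. \<phi> (r z) * g z * F (T z))"
      by (rule Bochner_Integration.integrable_bound[OF Bochner_Integration.integrable_add[OF g2 i0']])
        (use \<phi>b bnd1 in \<open>auto intro!: AE_I2\<close>)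
    have J1i: "integrable M (\<lambda>w. \<phi> (r w) * g (T w) * F w)"
      using I1i key(1)[of g F] by simp
    have I2i: "integrable M (\<lambda>z. (1 - \<phi> (r z)) * F z * g z)"
      by (rule Bochner_Integration.integrable_bound[OF Bochner_Integration.integrable_add[OF F2 g2]])
        (use \<phi>b in \<open>auto intro!: AE_I2 bnd2\<close>)
    have "inner_L2 M (kernel_op (mix_kernel M \<phi> \<xi> \<psi>) f) g
        = (\<integral>z. \<phi> (r z) * g z * F (T z) + (1 - \<phi> (r z)) * F z * g z \<partial>M)"
      unfolding inner_L2_def
      by (rule Bochner_Integration.integral_cong) (auto simp: kop FT[unfolded F_def] F_def algebra_simps)
    also have "\<dots> = (\<integral>z. \<phi> (r z) * g z * F (T z) \<partial>M) + (\<integral>z. (1 - \<phi> (r z)) * F z * g z \<partial>M)"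
      by (rule Bochner_Integration.integral_add[OF I1i I2i])
    also have "\<dots> = (\<integral>w. \<phi> (r w) * g (T w) * F w \<partial>M) + (\<integral>z. (1 - \<phi> (r z)) * F z * g z \<partial>M)"
      using key(2)[of g F] by simp
    also have "\<dots> = (\<integral>w. \<phi> (r w) * g (T w) * F w + (1 - \<phi> (r w)) * F w * g w \<partial>M)"
      by (rule Bochner_Integration.integral_add[OF J1i I2i, symmetric])
    also have "\<dots> = (\<integral>w. F w * kernel_op (mix_kernel M \<phi> \<xi> \<psi>) (g \<circ> \<xi>) w \<partial>M)"
      by (rule Bochner_Integration.integral_cong)
        (auto simp: kop assms(3) T_def algebra_simps measurable_space[OF \<xi>m])
    also have "\<dots> = (\<integral>w. f (\<xi> w) * kernel_op (mix_kernel M \<phi> \<xi> \<psi>) (g \<circ> \<xi>) (\<xi> (\<xi> w)) \<partial>M)"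
      by (rule Bochner_Integration.integral_cong) (auto simp: assms(3) F_def)
    also have "\<dots> = (\<integral>x. f x * kernel_op (mix_kernel M \<phi> \<xi> \<psi>) (g \<circ> \<xi>) (\<xi> x) \<partial>distr M M \<xi>)"
    proof (rule integral_distr[symmetric])
      show "\<xi> \<in> M \<rightarrow>\<^sub>M M" by simp
      have "(\<lambda>x. kernel_op (mix_kernel M \<phi> \<xi> \<psi>) (g \<circ> \<xi>) (\<xi> x)) \<in> borel_measurable M"
        apply (subst measurable_cong[where g="\<lambda>x. \<phi> (r (\<xi> x)) * g (\<xi> (\<psi> (\<xi> x))) + (1 - \<phi> (r (\<xi> x))) * g (\<xi> (\<xi> (\<xi> x)))"])
         apply (simp add: kop measurable_space[OF \<xi>m])
        apply measurable
        done
      then show "(\<lambda>x. f x * kernel_op (mix_kernel M \<phi> \<xi> \<psi>) (g \<circ> \<xi>) (\<xi> x)) \<in> borel_measurable M"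
        by measurable
    qed
    also have "\<dots> = inner_L2 M f ((\<lambda>f. f \<circ> \<xi>) (kernel_op (mix_kernel M \<phi> \<xi> \<psi>) ((\<lambda>f. f \<circ> \<xi>) g)))"
      unfolding inner_L2_def using assms(4) by simp
    finally show "inner_L2 M (kernel_op (mix_kernel M \<phi> \<xi> \<psi>) f) g =
        inner_L2 M f ((\<lambda>f. f \<circ> \<xi>) (kernel_op (mix_kernel M \<phi> \<xi> \<psi>) ((\<lambda>f. f \<circ> \<xi>) g)))" .
  qed
qed

end
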